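(* Fix an integer $s_y\ge 0$. For each integer $t\ge1$ let $A_t$ be the set $I_1\cup I_2\cup I_3\cup T\cup S$ where $Y=[0,s_y]$, $a=4s_y+3$, $I_1=[0,t]\times Y$, $T=[0,(t),at^2-t]\times\{0\}$, $S=[at^2,(t+1),(a+1)t^2-1]\times Y$, $I_2=[2at^2,2at^2+t]\times Y$, $I_3=[(3a+1)t^2,(3a+1)t^2+t]\times Y$. Then $A_t$ is a planar additive basis for $[0,(16s_y+14)t^2-1]\times[0,s_y]$, and its efficiency $c_t=\dfrac{(16s_y+14)t^2(s_y+1)}{|A_t|^2}$ satisfies $$\lim_{t\to\infty}c_t=\frac{2s_y+2}{8s_y+7}.$$
   Context: For integers $a\le b$, $[a,b]$ denotes $\{a,\dots,b\}$. For integers $a\le b$ and $t\ge1$ with $t\mid b-a$, $[a,(t),b]=\{a,a+t,\dots,b\}$. A planar additive basis for $[0,s_x]\times[0,s_y]$ is a set $A$ of points with non-negative integer coordinates with $A+A\supseteq[0,s_x]\times[0,s_y]$ ($A+A$ the vector sumset, summands may coincide); its efficiency is $(s_x+1)(s_y+1)/|A|^2$. *)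

theory Defs
  imports "HOL-Analysis.Analysis"
begin

text \<open>Arithmetic progression [a,(t),b] = {a, a+t, ..., b} (with t >= 1, t dvd b - a).\<close>
definition step_interval :: "nat \<Rightarrow> nat \<Rightarrow> nat \<Rightarrow> nat set" where
  "step_interval a t b = {x. a \<le> x \<and> x \<le> b \<and> t dvd (x - a)}"

definition sumset2 :: "(nat \<times> nat) set \<Rightarrow> (nat \<times> nat) set" where
  "sumset2 A = {(fst p + fst q, snd p + snd q) | p q. p \<in> A \<and> q \<in> A}"

definition planar_basis :: "(nat \<times> nat) set \<Rightarrow> nat \<Rightarrow> nat \<Rightarrow> bool" where
  "planar_basis A sx sy \<longleftrightarrow> {0..sx} \<times> {0..sy} \<subseteq> sumset2 A"

definition efficiency :: "(nat \<times> nat) set \<Rightarrow> nat \<Rightarrow> nat \<Rightarrow> real" where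
  "efficiency A sx sy = real ((sx + 1) * (sy + 1)) / real (card A) ^ 2"

definition A_t :: "nat \<Rightarrow> nat \<Rightarrow> (nat \<times> nat) set" where
  "A_t sy t = (let Y = {0..sy}; a = 4 * sy + 3;
      I1 = {0..t} \<times> Y;
      T = step_interval 0 t (a * t^2 - t) \<times> {0};
      S = step_interval (a * t^2) (t + 1) ((a + 1) * t^2 - 1) \<times> Y;
      I2 = {2 * a * t^2 .. 2 * a * t^2 + t} \<times> Y;
      I3 = {(3 * a + 1) * t^2 .. (3 * a + 1) * t^2 + t} \<times> Y
    in I1 \<union> I2 \<union> I3 \<union> T \<union> S)"

end

theory Submission
  imports Defs
begin

lemma L1:
  fixes m a t :: nat
  assumes "a \<ge> 1" "t \<ge> 1" "m \<le> a*t^2"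
  shows "\<exists>j r. r \<le> t \<and> j*t + t \<le> a*t^2 \<and> m = j*t + r"
proof (cases "m < a*t^2")
  case True
  define j where "j = m div t"
  define r where "r = m mod t"
  have m: "m = j*t + r" unfolding j_def r_def by simp
  have "r < t" unfolding r_def using assms(2) by simp
  have "j*t < (a*t)*t"
  proof -
    have "j*t \<le> m" using m by simp
    moreover have "m < (a*t)*t" using True by (metis power2_eq_square mult.assoc)
    ultimately show ?thesis by linarith
  qed
  hence "j < a*t" using mult_less_cancel2 by blast
  hence "Suc j \<le> a*t" by simp
  hence "Suc j * t \<le> a*t*t" by (rule mult_right_mono) simp
  hence "j*t + t \<le> a*t^2" by (simp add: power2_eq_square)
  then show ?thesis using m \<open>r<t\<close> by (intro exI[of _ j] exI[of _ r]) simp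
next
  case False
  hence m: "m = a*t^2" using assms by simp
  have "a*t \<ge> 1" using assms by simp
  then obtain j where j: "a*t = Suc j" by (cases "a*t") auto
  have "m = (a*t)*t" using m by (simp add: power2_eq_square)
  also have "\<dots> = j*t + t" using j by simp
  finally have "m = j*t + t" .
  moreover have "j*t+t \<le> a*t^2" using \<open>m = j*t+t\<close> m by simp
  ultimately show ?thesis by (intro exI[of _ j] exI[of _ t]) simp
qed

lemma L2:
  fixes m t :: nat
  assumes "m < t*(t+1)"
  shows "\<exists>k r. k < t \<and> r \<le> t \<and> m = k*(t+1) + r"
proof -
  define k where "k = m div (t+1)"
  define r where "r = m mod (t+1)"
  have m: "m = k*(t+1) + r" unfolding k_def r_def by (metis div_mult_mod_eq)
  have "r < t+1" unfolding r_def by simp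
  have "k < t" unfolding k_def using assms by (simp add: less_mult_imp_div_less)
  then show ?thesis using m \<open>r < t+1\<close> by auto
qed

lemma L3:
  fixes m a t :: nat
  assumes "t \<ge> 1" "t*t - t \<le> m" "m < a*t^2"
  shows "\<exists>k j. k < t \<and> j*t + t \<le> a*t^2 \<and> m = k*(t+1) + j*t"
proof -
  define q where "q = m div t"
  define k where "k = m mod t"
  have m: "m = q*t + k" unfolding q_def k_def by simp
  have kt: "k < t" unfolding k_def using assms(1) by simp
  have "(t-1)*t \<le> m" using assms(2) by (simp add: diff_mult_distrib)
  hence "(t-1)*t div t \<le> m div t" by (rule div_le_mono)
  hence "t - 1 \<le> q" unfolding q_def using assms(1) by simp
  hence kq: "k \<le> q" using kt by simp
  define j where "j = q - k"
  have "m = k*(t+1) + j*t" using m kq unfolding j_def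
    by (simp add: algebra_simps diff_mult_distrib)
  moreover have "q*t < (a*t)*t"
  proof -
    have "q*t \<le> m" using m by simp
    moreover have "m < (a*t)*t" using assms(3) by (metis power2_eq_square mult.assoc)
    ultimately show ?thesis by linarith
  qed
  hence "q < a*t" using mult_less_cancel2 by blast
  hence "Suc j \<le> a*t" unfolding j_def by simp
  hence "Suc j * t \<le> a*t*t" by (rule mult_right_mono) simp
  hence "j*t + t \<le> a*t^2" by (simp add: power2_eq_square)
  ultimately show ?thesis using kt by blast
qed


lemma A_I1: fixes sy t x y j :: nat shows "x \<le> t \<Longrightarrow> y \<le> sy \<Longrightarrow> (x,y) \<in> A_t sy t"
  by (simp add: A_t_def Let_def)
lemma A_I2: fixes sy t x y j :: nat shows "x \<le> t \<Longrightarrow> y \<le> sy \<Longrightarrow> (2*(4 * sy+3)*t^2 + x, y) \<in> A_t sy t"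
  by (simp add: A_t_def Let_def)
lemma A_I3: fixes sy t x y j :: nat assumes "x \<le> t" "y \<le> sy" shows "((3*(4 * sy+3)+1)*t^2 + x, y) \<in> A_t sy t"
proof -
  have "((3*(4 * sy+3)+1)*t^2 + x, y) \<in> {(3*(4 * sy+3)+1)*t^2 .. (3*(4 * sy+3)+1)*t^2 + t} \<times> {0..sy}"
    using assms by auto
  thus ?thesis unfolding A_t_def Let_def by blast
qed
lemma A_T: fixes sy t x y j :: nat shows "j*t + t \<le> (4 * sy+3)*t^2 \<Longrightarrow> (j*t, 0) \<in> A_t sy t"
  by (simp add: A_t_def Let_def step_interval_def le_diff_conv2)
lemma A_S:
  fixes sy t k y :: nat
  assumes "k < t" "y \<le> sy"
  shows "((4 * sy+3)*t^2 + k*(t+1), y) \<in> A_t sy t"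
proof -
  have "Suc k * (t+1) \<le> t*(t+1)" using assms(1) by (intro mult_right_mono) auto
  hence h: "k*(t+1) + 1 \<le> t^2" by (simp add: power2_eq_square)
  have "(4 * sy+3)*t^2 + k*(t+1) \<le> (4 * sy+3+1)*t^2 - 1" using h by (simp add: algebra_simps)
  moreover have "(t+1) dvd ((4 * sy+3)*t^2 + k*(t+1) - (4 * sy+3)*t^2)"
    by (simp only: add_diff_cancel_left') (rule dvd_triv_right)
  ultimately have "(4 * sy+3)*t^2 + k*(t+1) \<in> step_interval ((4 * sy+3)*t^2) (t+1) ((4 * sy+3+1)*t^2 - 1)"
    unfolding step_interval_def by simp
  hence "((4 * sy+3)*t^2 + k*(t+1), y) \<in> step_interval ((4 * sy+3)*t^2) (t+1) ((4 * sy+3+1)*t^2 - 1) \<times> {0..sy}"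
    using assms by simp
  thus ?thesis unfolding A_t_def Let_def by blast
qed

lemma sum_in: "p \<in> A \<Longrightarrow> q \<in> A \<Longrightarrow> (fst p + fst q, snd p + snd q) \<in> sumset2 A"
  unfolding sumset2_def by blast

lemma sum_in': "(f,y) \<in> A \<Longrightarrow> (b,0) \<in> A \<Longrightarrow> x = f + b \<Longrightarrow> (x,y) \<in> sumset2 A"
  using sum_in[of "(f,y)" A "(b,0)"] by simp

lemma basis:
  assumes t: "t \<ge> 1"
  shows "planar_basis (A_t sy t) ((16 * sy + 14) * t^2 - 1) sy"
  unfolding planar_basis_def
proof (rule subsetI)
  fix p assume "p \<in> {0..(16 * sy + 14) * t^2 - 1} \<times> {0..sy}"
  then obtain x y where p: "p = (x,y)" and y: "y \<le> sy" and x0: "x \<le> (16 * sy + 14) * t^2 - 1"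
    by auto
  define a where "a = 4 * sy+3"
  have a1: "a \<ge> 1" unfolding a_def by simp
  have tt: "t^2 \<ge> 1" using t by simp
  have x: "x < (4*a+2)*t^2" using x0 tt unfolding a_def by (simp add: algebra_simps)
  have t2: "t*t = t^2" by (simp add: power2_eq_square)
  let ?A = "A_t sy t"
  have I1: "\<And>x y. x \<le> t \<Longrightarrow> y \<le> sy \<Longrightarrow> (x,y) \<in> ?A" by (rule A_I1)
  have I2: "\<And>x y. x \<le> t \<Longrightarrow> y \<le> sy \<Longrightarrow> (2*a*t^2 + x,y) \<in> ?A" unfolding a_def by (rule A_I2)
  have I3: "\<And>x y. x \<le> t \<Longrightarrow> y \<le> sy \<Longrightarrow> ((3*a+1)*t^2 + x,y) \<in> ?A" unfolding a_def by (rule A_I3)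
  have T: "\<And>j. j*t + t \<le> a*t^2 \<Longrightarrow> (j*t,0) \<in> ?A" unfolding a_def by (rule A_T)
  have S: "\<And>k y. k < t \<Longrightarrow> y \<le> sy \<Longrightarrow> (a*t^2 + k*(t+1),y) \<in> ?A" unfolding a_def by (rule A_S)
  have "(x,y) \<in> sumset2 ?A"
  proof -
    consider "x \<le> a*t^2" | "a*t^2 \<le> x" "x < a*t^2 + t*(t+1)" | "a*t^2 + (t*t-t) \<le> x" "x < 2*a*t^2"
      | "2*a*t^2 \<le> x" "x \<le> 3*a*t^2" | "3*a*t^2 \<le> x" "x < 3*a*t^2 + t*(t+1)"
      | "(3*a+1)*t^2 \<le> x" "x \<le> (4*a+1)*t^2" | "(4*a+1)*t^2 \<le> x"
      using x t2 by (simp add: algebra_simps) linarith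
    then show ?thesis
    proof cases
      case 1
      then obtain j r where "r \<le> t" "j*t + t \<le> a*t^2" "x = r + j*t" using L1[OF a1 t] by force
      then show ?thesis using I1 T y by (intro sum_in') auto
    next
      case 2
      have "x - a*t^2 < t*(t+1)" using 2 by linarith
      then obtain k r where "k < t" "r \<le> t" "x - a*t^2 = k*(t+1) + r" using L2 by blast
      hence "x = (a*t^2 + k*(t+1)) + r" using 2 by simp
      then show ?thesis using S I1 y \<open>k<t\<close> \<open>r \<le> t\<close> by (intro sum_in') auto
    next
      case 3
      then obtain k j where "k < t" "j*t + t \<le> a*t^2" "x - a*t^2 = k*(t+1) + j*t"
      proof -
        have e: "2*a*t^2 = a*t^2 + a*t^2" by simp
        have "t*t - t \<le> x - a*t^2" using 3 by linarith
        moreover have "x - a*t^2 < a*t^2" using 3 e by linarith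
        ultimately show ?thesis using L3[OF t, of "x - a*t^2" a] that by blast
      qed
      moreover have "a*t^2 \<le> x" using 3 by linarith
      ultimately have "x = (a*t^2 + k*(t+1)) + j*t" by linarith
      then show ?thesis using S T y \<open>k<t\<close> \<open>j*t + t \<le> a*t^2\<close> by (intro sum_in') auto
    next
      case 4
      have e: "3*a*t^2 = 2*a*t^2 + a*t^2" by (simp add: algebra_simps)
      have "x - 2*a*t^2 \<le> a*t^2" using 4 e by linarith
      then obtain j r where h: "r \<le> t" "j*t + t \<le> a*t^2" "x - 2*a*t^2 = j*t + r"
        using L1[OF a1 t] by blast
      have "x = (2*a*t^2 + r) + j*t" using 4 h by linarith
      then show ?thesis using I2 T y h by (intro sum_in') auto
    next
      case 5
      have "x - 3*a*t^2 < t*(t+1)" using 5 by linarith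
      then obtain k r where h: "k < t" "r \<le> t" "x - 3*a*t^2 = k*(t+1) + r" using L2 by blast
      have e: "3*a*t^2 = 2*a*t^2 + a*t^2" by (simp add: algebra_simps)
      have "x = (2*a*t^2 + r) + (a*t^2 + k*(t+1))" using 5 h e by linarith
      then show ?thesis by (rule sum_in'[OF I2[OF h(2) y] S[OF h(1) le0]])
    next
      case 6
      have e: "(4*a+1)*t^2 = (3*a+1)*t^2 + a*t^2" by (simp add: algebra_simps)
      have "x - (3*a+1)*t^2 \<le> a*t^2" using 6 e by linarith
      then obtain j r where h: "r \<le> t" "j*t + t \<le> a*t^2" "x - (3*a+1)*t^2 = j*t + r"
        using L1[OF a1 t] by blast
      have "x = ((3*a+1)*t^2 + r) + j*t" using 6 h by linarith
      then show ?thesis using I3 T y h by (intro sum_in') auto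
    next
      case 7
      have e: "(4*a+2)*t^2 = (4*a+1)*t^2 + t*t" using t2 by (simp add: algebra_simps)
      have e2: "t*(t+1) = t*t + t" by (simp add: algebra_simps)
      have "x - (4*a+1)*t^2 < t*(t+1)" using 7 x e e2 by linarith
      then obtain k r where h: "k < t" "r \<le> t" "x - (4*a+1)*t^2 = k*(t+1) + r" using L2 by blast
      have e3: "(4*a+1)*t^2 = (3*a+1)*t^2 + a*t^2" by (simp add: algebra_simps)
      have "x = ((3*a+1)*t^2 + r) + (a*t^2 + k*(t+1))" using 7 h e3 by linarith
      then show ?thesis by (rule sum_in'[OF I3[OF h(2) y] S[OF h(1) le0]])
    qed
  qed
  thus "p \<in> sumset2 ?A" using p by simp
qed


lemma SI_T:
  fixes a t :: nat
  assumes t: "t \<ge> 1" and a: "a \<ge> 1"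
  shows "step_interval 0 t (a*t^2 - t) = (\<lambda>j. j*t) ` {..<a*t}"
proof (rule set_eqI, rule iffI)
  fix x assume "x \<in> step_interval 0 t (a*t^2 - t)"
  hence d: "t dvd x" and le: "x \<le> a*t^2 - t" unfolding step_interval_def by auto
  then obtain j where x: "x = j*t" by (metis dvd_def mult.commute)
  have "1 \<le> a*t" using a t by simp
  hence "1*t \<le> (a*t)*t" by (rule mult_right_mono) simp
  hence h1: "t \<le> a*t*t" by simp
  have h2: "j*t \<le> a*t*t - t" using le x by (simp add: power2_eq_square mult.assoc)
  have "j*t + t \<le> a*t*t" using h1 h2 by linarith
  hence "Suc j * t \<le> (a*t)*t" by (simp add: mult.assoc)
  hence "Suc j \<le> a*t" using t mult_le_cancel2[of "Suc j" t "a*t"] by simp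
  thus "x \<in> (\<lambda>j. j*t) ` {..<a*t}" using x by auto
next
  fix x assume "x \<in> (\<lambda>j. j*t) ` {..<a*t}"
  then obtain j where x: "x = j*t" and j: "j < a*t" by auto
  have "Suc j * t \<le> (a*t)*t" using j by (intro mult_right_mono) auto
  hence "j*t + t \<le> a*t^2" by (simp add: power2_eq_square mult.assoc)
  hence "x \<le> a*t^2 - t" using x by simp
  thus "x \<in> step_interval 0 t (a*t^2 - t)" unfolding step_interval_def using x by simp
qed

lemma SI_S:
  fixes c t :: nat
  assumes t: "t \<ge> 1"
  shows "step_interval c (t+1) (c + t^2 - 1) = (\<lambda>k. c + k*(t+1)) ` {..<t}"
proof (rule set_eqI, rule iffI)
  fix x assume "x \<in> step_interval c (t+1) (c + t^2 - 1)"
  hence c: "c \<le> x" and d: "(t+1) dvd (x - c)" and le: "x \<le> c + t^2 - 1" unfolding step_interval_def by auto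
  then obtain k where k: "x - c = k*(t+1)" by (metis dvd_def mult.commute)
  have "k*(t+1) < t*(t+1)" using le k c t by (simp add: power2_eq_square algebra_simps)
  hence "k < t" by (metis mult_less_cancel2)
  moreover have "x = c + k*(t+1)" using k c by simp
  ultimately show "x \<in> (\<lambda>k. c + k*(t+1)) ` {..<t}" by auto
next
  fix x assume "x \<in> (\<lambda>k. c + k*(t+1)) ` {..<t}"
  then obtain k where x: "x = c + k*(t+1)" and k: "k < t" by auto
  have "Suc k * (t+1) \<le> t*(t+1)" using k by (intro mult_right_mono) auto
  hence h: "k*(t+1) + 1 \<le> t^2" by (simp add: power2_eq_square)
  have "x - c = k*(t+1)" using x by simp
  hence "(t+1) dvd (x - c)" by (simp only:) (rule dvd_triv_right)
  moreover have "x \<le> c + t^2 - 1" using x h by linarith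
  ultimately show "x \<in> step_interval c (t+1) (c + t^2 - 1)" unfolding step_interval_def using x by simp
qed

lemma disj_fst:
  fixes c :: nat
  assumes "\<And>p. p \<in> X \<Longrightarrow> fst p < c" "\<And>p. p \<in> Y \<Longrightarrow> c \<le> fst p"
  shows "X \<inter> Y = {}"
proof -
  { fix p assume "p \<in> X" "p \<in> Y"
    hence False using assms(1)[OF \<open>p \<in> X\<close>] assms(2)[OF \<open>p \<in> Y\<close>] by simp }
  thus ?thesis by blast
qed

lemma card_A:
  fixes sy t :: nat
  assumes t: "t \<ge> 1"
  shows "card (A_t sy t) = (8 * sy + 7)*t + 3 * sy + 1"
proof -
  define a where "a = 4 * sy + 3"
  define Y where "Y = {0..sy}"
  have a1: "a \<ge> 1" unfolding a_def by simp
  define B1 where "B1 = {0..t} \<times> Y"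
  define TT where "TT = ((\<lambda>j. j*t) ` {..<a*t}) \<times> {0::nat}"
  define SS where "SS = ((\<lambda>k. a*t^2 + k*(t+1)) ` {..<t}) \<times> Y"
  define B2 where "B2 = {2*a*t^2 .. 2*a*t^2+t} \<times> Y"
  define B3 where "B3 = {(3*a+1)*t^2 .. (3*a+1)*t^2+t} \<times> Y"
  have e1: "(a+1)*t^2 - 1 = a*t^2 + t^2 - 1" by (simp add: algebra_simps)
  have A: "A_t sy t = (((B1 \<union> TT) \<union> SS) \<union> B2) \<union> B3"
    unfolding A_t_def Let_def a_def[symmetric] Y_def[symmetric] e1 SI_T[OF t a1] SI_S[OF t]
      B1_def TT_def SS_def B2_def B3_def by blast
  have fin: "finite B1" "finite TT" "finite SS" "finite B2" "finite B3"
    unfolding B1_def TT_def SS_def B2_def B3_def Y_def by auto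
  have cY: "card Y = sy + 1" unfolding Y_def by simp
  have c1: "card B1 = (t+1)*(sy+1)" unfolding B1_def by (simp add: card_cartesian_product cY)
  have c2: "card B2 = (t+1)*(sy+1)" unfolding B2_def by (simp add: card_cartesian_product cY)
  have c3: "card B3 = (t+1)*(sy+1)" unfolding B3_def by (simp add: card_cartesian_product cY)
  have injT: "inj_on (\<lambda>j. j*t) {..<a*t}" using t by (auto simp: inj_on_def)
  have cT: "card TT = a*t" unfolding TT_def
    by (simp add: card_cartesian_product card_image[OF injT])
  have injS: "inj_on (\<lambda>k. a*t^2 + k*(t+1)) {..<t}"
  proof (rule inj_onI)
    fix x y assume "a*t^2 + x*(t+1) = a*t^2 + y*(t+1)"
    hence "x*(t+1) = y*(t+1)" by (rule add_left_imp_eq)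
    thus "x = y" by (metis mult_right_cancel add_is_0 one_neq_zero)
  qed
  have cS: "card SS = t*(sy+1)" unfolding SS_def card_cartesian_product card_image[OF injS] cY
    by simp
  have "3*1 \<le> a*t" unfolding a_def using t by (intro mult_le_mono) auto
  hence at3: "a*t \<ge> 3" by simp
  have "B1 \<inter> TT = {(0,0),(t,0)}"
  proof (rule set_eqI, rule iffI)
    fix p assume "p \<in> B1 \<inter> TT"
    hence pB: "p \<in> B1" and pT: "p \<in> TT" by auto
    then obtain j where p: "p = (j*t, 0)" unfolding TT_def by auto
    have "j*t \<le> 1*t" using pB p unfolding B1_def by simp
    hence "j \<le> 1" using t mult_le_cancel2[of j t 1] by simp
    thus "p \<in> {(0,0),(t,0)}" using p by (cases j) auto
  next
    fix p :: "nat \<times> nat" assume p: "p \<in> {(0,0),(t,0)}"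
    have "(0::nat) \<in> {..<a*t}" "(1::nat) \<in> {..<a*t}" unfolding lessThan_iff using at3 by linarith+
    hence "(0*t, 0::nat) \<in> TT" "(1*t, 0::nat) \<in> TT" unfolding TT_def by blast+
    thus "p \<in> B1 \<inter> TT" using p unfolding B1_def Y_def by auto
  qed
  hence cI: "card (B1 \<inter> TT) = 2" using t by simp
  have cU: "card (B1 \<union> TT) + 2 = (t+1)*(sy+1) + a*t"
    using card_Un_Int[OF fin(1,2)] cI c1 cT by simp
  have at2: "a*t^2 = (a*t)*t" by (simp add: power2_eq_square)
  have "2*t \<le> (a*t)*t" using at3 by (intro mult_right_mono) auto
  hence tle: "t \<le> a*t^2 - t" using at2 by linarith
  have F1: "fst p < a*t^2" if "p \<in> B1 \<union> TT" for p
    using that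
  proof
    assume "p \<in> B1" thus ?thesis using tle t unfolding B1_def by auto
  next
    assume "p \<in> TT"
    then obtain j where "p = (j*t,0)" "j < a*t" unfolding TT_def by auto
    moreover have "j*t < (a*t)*t" using \<open>j < a*t\<close> t by simp
    ultimately show ?thesis unfolding at2 by simp
  qed
  have tsq: "t^2 \<le> a*t^2" using a1 by simp
  have F2: "a*t^2 \<le> fst p \<and> fst p < 2*a*t^2" if pS: "p \<in> SS" for p
  proof -
    obtain k y where p: "p = (a*t^2 + k*(t+1), y)" and k: "k < t" using pS unfolding SS_def by auto
    have "Suc k * (t+1) \<le> t*(t+1)" using k by (intro mult_right_mono) auto
    hence h: "k*(t+1) + 1 \<le> t^2" by (simp add: power2_eq_square)
    have e: "2*a*t^2 = a*t^2 + a*t^2" by simp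
    have "fst p = a*t^2 + k*(t+1)" using p by simp
    thus ?thesis using h tsq e by linarith
  qed
  have F3: "2*a*t^2 \<le> fst p \<and> fst p < (3*a+1)*t^2" if "p \<in> B2" for p
  proof -
    have e: "(3*a+1)*t^2 = 2*a*t^2 + a*t^2 + t^2" by (simp add: algebra_simps)
    have "2*a*t^2 \<le> fst p" "fst p \<le> 2*a*t^2 + t" using that unfolding B2_def by auto
    thus ?thesis using e tle t by linarith
  qed
  have F4: "(3*a+1)*t^2 \<le> fst p" if "p \<in> B3" for p
    using that unfolding B3_def by auto
  have d1: "(B1 \<union> TT) \<inter> SS = {}"
  proof (rule disj_fst[of _ "a*t^2"])
    fix p assume "p \<in> B1 \<union> TT" thus "fst p < a*t^2" by (rule F1)
  next
    fix p assume "p \<in> SS" thus "a*t^2 \<le> fst p" using F2 by blast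
  qed
  have e2: "2*a*t^2 = a*t^2 + a*t^2" by simp
  have G: "fst p < 2*a*t^2" if pG: "p \<in> (B1 \<union> TT) \<union> SS" for p
  proof -
    from pG consider "p \<in> B1 \<union> TT" | "p \<in> SS" by blast
    then show ?thesis
    proof cases
      case 1 thus ?thesis using F1[OF 1] e2 by linarith
    next
      case 2 thus ?thesis using F2[OF 2] by linarith
    qed
  qed
  have d2: "((B1 \<union> TT) \<union> SS) \<inter> B2 = {}"
  proof (rule disj_fst[of _ "2*a*t^2"])
    fix p assume "p \<in> (B1 \<union> TT) \<union> SS"
    thus "fst p < 2*a*t^2" by (rule G)
  next
    fix p assume "p \<in> B2" thus "2*a*t^2 \<le> fst p" using F3 by blast
  qed
  have e3: "2*a*t^2 \<le> (3*a+1)*t^2" by simp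
  have d3: "(((B1 \<union> TT) \<union> SS) \<union> B2) \<inter> B3 = {}"
  proof (rule disj_fst[of _ "(3*a+1)*t^2"])
    fix p assume pG: "p \<in> ((B1 \<union> TT) \<union> SS) \<union> B2"
    then consider "p \<in> (B1 \<union> TT) \<union> SS" | "p \<in> B2" by blast
    then show "fst p < (3*a+1)*t^2"
    proof cases
      case 1 thus ?thesis using G[OF 1] e3 by linarith
    next
      case 2 thus ?thesis using F3[OF 2] by linarith
    qed
  next
    fix p assume "p \<in> B3" thus "(3*a+1)*t^2 \<le> fst p" using F4 by blast
  qed
  have "card (A_t sy t) = card (B1 \<union> TT) + card SS + card B2 + card B3"
    unfolding A using fin d1 d2 d3 by (simp add: card_Un_disjoint)
  hence "card (A_t sy t) + 2 = (t+1)*(sy+1) + a*t + t*(sy+1) + (t+1)*(sy+1) + (t+1)*(sy+1)"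
    using cU cS c2 c3 by linarith
  also have "\<dots> = (8 * sy + 7)*t + 3 * sy + 1 + 2" unfolding a_def by (simp add: algebra_simps)
  finally show ?thesis by linarith
qed


theorem mainTheorem14:
  fixes sy :: nat
  shows "(\<forall>t\<ge>1. planar_basis (A_t sy t) ((16 * sy + 14) * t^2 - 1) sy)
    \<and> (\<forall>t\<ge>1. efficiency (A_t sy t) ((16 * sy + 14) * t^2 - 1) sy
          = real ((16 * sy + 14) * t^2 * (sy + 1)) / real (card (A_t sy t)) ^ 2)
    \<and> ((\<lambda>t. efficiency (A_t sy t) ((16 * sy + 14) * t^2 - 1) sy)
          \<longlonglongrightarrow> (2 * real sy + 2) / (8 * real sy + 7))"
proof (intro conjI allI impI)
  fix t :: nat assume "t \<ge> 1"
  thus "planar_basis (A_t sy t) ((16 * sy + 14) * t^2 - 1) sy" by (rule basis)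
next
  fix t :: nat assume t: "t \<ge> 1"
  have "(16 * sy + 14) * t^2 \<ge> 1" using t by simp
  hence "(16 * sy + 14) * t^2 - 1 + 1 = (16 * sy + 14) * t^2" by (rule le_add_diff_inverse2)
  thus "efficiency (A_t sy t) ((16 * sy + 14) * t^2 - 1) sy
          = real ((16 * sy + 14) * t^2 * (sy + 1)) / real (card (A_t sy t)) ^ 2"
    unfolding efficiency_def by simp
next
  define c where "c = 8 * real sy + 7"
  define d where "d = 3 * real sy + 1"
  define s where "s = real sy"
  have c0: "c > 0" unfolding c_def by simp
  have ev: "\<forall>\<^sub>F t in sequentially. 2*c*(s+1) / (c + d / real t)^2
      = efficiency (A_t sy t) ((16 * sy + 14) * t^2 - 1) sy"
    unfolding eventually_sequentially
  proof (intro exI[of _ 1] allI impI)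
    fix t :: nat assume t: "t \<ge> 1"
    have "(16 * sy + 14) * t^2 \<ge> 1" using t by simp
    hence e1: "(16 * sy + 14) * t^2 - 1 + 1 = (16 * sy + 14) * t^2" by (rule le_add_diff_inverse2)
    have tp: "real t > 0" using t by simp
    have "efficiency (A_t sy t) ((16 * sy + 14) * t^2 - 1) sy
        = real ((16 * sy + 14) * t^2 * (sy + 1)) / real ((8 * sy + 7)*t + 3 * sy + 1) ^ 2"
      unfolding efficiency_def e1 card_A[OF t] ..
    also have "\<dots> = (2*c*(s+1) * real t^2) / (c * real t + d)^2"
      unfolding c_def d_def s_def by (simp add: algebra_simps)
    also have "\<dots> = 2*c*(s+1) / (c + d / real t)^2"
    proof -
      have "c + d / real t = (c * real t + d) / real t" using tp by (simp add: field_simps)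
      thus ?thesis using tp by (simp add: power_divide)
    qed
    finally show "2*c*(s+1) / (c + d / real t)^2
      = efficiency (A_t sy t) ((16 * sy + 14) * t^2 - 1) sy" by simp
  qed
  have "(\<lambda>t. 2*c*(s+1) / (c + d / real t)^2) \<longlonglongrightarrow> 2*c*(s+1) / (c + 0)^2"
    using c0 by (intro tendsto_intros) auto
  moreover have "2*c*(s+1) / (c + 0)^2 = (2 * real sy + 2) / (8 * real sy + 7)"
    using c0 unfolding s_def c_def[symmetric] by (simp add: power2_eq_square field_simps)
  ultimately show "(\<lambda>t. efficiency (A_t sy t) ((16 * sy + 14) * t^2 - 1) sy)
          \<longlonglongrightarrow> (2 * real sy + 2) / (8 * real sy + 7)"
    using Lim_transform_eventually[OF _ ev] by simp
qed

end
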